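(* Let $F$ be an Archimedean vector lattice with universal completion $F^{u}$, and let $E$ be a regular sublattice of $F$. Then the order closure $\overline{E}^{F^{u}}_{o}$ of $E$ viewed as a sublattice of $F^{u}$ is the universal completion of $E$ (i.e. it is universally complete and contains $E$ as an order dense sublattice), and $\overline{E}^{F}_{o}=\overline{E}^{F^{u}}_{o}\cap F$.
   Context: An order complete vector lattice is universally complete if every set of pairwise disjoint elements is order bounded. The universal completion $F^u$ of an Archimedean $F$ is the (unique) universally complete vector lattice containing $F$ as an order dense sublattice. Order convergence: a net converges to $f$ if there is a set $G$ with $\bigwedge G=0$ such that for each $g\in G$ the net is eventually in $[f-g,f+g]$. A set is order closed if it contains order limits of all its nets; the order closure $\overline{E}_o$ (in a given ambient lattice) is the intersection of all order closed sets containing $E$. A sublattice $E\subset F$ is regular if $\bigwedge_E G=0$ implies $\bigwedge_F G=0$ for all $G\subset E$; it is order dense in $H\supset E$ if each $h>0$ in $H$ dominates some $e\in E$ with $e>0$. *)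

theory Defs
  imports Complex_Main
begin

text \<open>Vector lattices: an ambient type of class ordered_real_vector and lattice
 (the lattice order is the vector order).  All notions below are relative to a
 carrier set S of the ambient type, ordered and operated on as in the ambient type.\<close>

definition vabs :: "'a::{ordered_real_vector,lattice} \<Rightarrow> 'a" where
  "vabs x = sup x (- x)"

definition riesz_subspace :: "'a::{ordered_real_vector,lattice} set \<Rightarrow> bool" where
  "riesz_subspace S \<longleftrightarrow> 0 \<in> S \<and>
     (\<forall>x\<in>S. \<forall>y\<in>S. x + y \<in> S) \<and>
     (\<forall>c::real. \<forall>x\<in>S. c *\<^sub>R x \<in> S) \<and>
     (\<forall>x\<in>S. \<forall>y\<in>S. sup x y \<in> S \<and> inf x y \<in> S)"

definition is_inf_in :: "'a::{ordered_real_vector,lattice} set \<Rightarrow> 'a set \<Rightarrow> 'a \<Rightarrow> bool" where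
  "is_inf_in S G x \<longleftrightarrow> x \<in> S \<and> (\<forall>g\<in>G. x \<le> g) \<and>
     (\<forall>y\<in>S. (\<forall>g\<in>G. y \<le> g) \<longrightarrow> y \<le> x)"

definition is_sup_in :: "'a::{ordered_real_vector,lattice} set \<Rightarrow> 'a set \<Rightarrow> 'a \<Rightarrow> bool" where
  "is_sup_in S G x \<longleftrightarrow> x \<in> S \<and> (\<forall>g\<in>G. g \<le> x) \<and>
     (\<forall>y\<in>S. (\<forall>g\<in>G. g \<le> y) \<longrightarrow> x \<le> y)"

definition archimedean_on :: "'a::{ordered_real_vector,lattice} set \<Rightarrow> bool" where
  "archimedean_on S \<longleftrightarrow>
     (\<forall>x\<in>S. \<forall>y\<in>S. 0 \<le> x \<and> (\<forall>n::nat. real n *\<^sub>R x \<le> y) \<longrightarrow> x = 0)"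

definition order_complete_on :: "'a::{ordered_real_vector,lattice} set \<Rightarrow> bool" where
  "order_complete_on S \<longleftrightarrow>
     (\<forall>A\<subseteq>S. A \<noteq> {} \<and> (\<exists>u\<in>S. \<forall>a\<in>A. a \<le> u) \<longrightarrow> (\<exists>s. is_sup_in S A s))"

definition pairwise_disjoint :: "'a::{ordered_real_vector,lattice} set \<Rightarrow> bool" where
  "pairwise_disjoint D \<longleftrightarrow> (\<forall>x\<in>D. \<forall>y\<in>D. x \<noteq> y \<longrightarrow> inf (vabs x) (vabs y) = 0)"

definition order_bounded_in :: "'a::{ordered_real_vector,lattice} set \<Rightarrow> 'a set \<Rightarrow> bool" where
  "order_bounded_in S D \<longleftrightarrow> (\<exists>a\<in>S. \<exists>b\<in>S. \<forall>x\<in>D. a \<le> x \<and> x \<le> b)"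

definition universally_complete :: "'a::{ordered_real_vector,lattice} set \<Rightarrow> bool" where
  "universally_complete S \<longleftrightarrow> riesz_subspace S \<and> order_complete_on S \<and>
     (\<forall>D\<subseteq>S. pairwise_disjoint D \<longrightarrow> order_bounded_in S D)"

definition order_dense_in :: "'a::{ordered_real_vector,lattice} set \<Rightarrow> 'a set \<Rightarrow> bool" where
  "order_dense_in H E \<longleftrightarrow> (\<forall>h\<in>H. 0 < h \<longrightarrow> (\<exists>e\<in>E. 0 < e \<and> e \<le> h))"

definition regular_in :: "'a::{ordered_real_vector,lattice} set \<Rightarrow> 'a set \<Rightarrow> bool" where
  "regular_in F E \<longleftrightarrow> (\<forall>G\<subseteq>E. is_inf_in E G 0 \<longrightarrow> is_inf_in F G 0)"

text \<open>Order convergence in S of a net x indexed along the filter N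
 (a net over a directed index set D corresponds to N = the filter of tails of D).\<close>
definition order_conv_in ::
  "'a::{ordered_real_vector,lattice} set \<Rightarrow> ('i \<Rightarrow> 'a) \<Rightarrow> 'i filter \<Rightarrow> 'a \<Rightarrow> bool" where
  "order_conv_in S x N f \<longleftrightarrow> f \<in> S \<and>
     (\<exists>G\<subseteq>S. is_inf_in S G 0 \<and>
        (\<forall>g\<in>G. eventually (\<lambda>i. f - g \<le> x i \<and> x i \<le> f + g) N))"

text \<open>A \<subseteq> S is order closed in S: it contains order limits (in S) of all nets
 in A.  Nets are represented by proper filters on the ambient type (the image
 filter of the net).\<close>
definition order_closed_in :: "'a::{ordered_real_vector,lattice} set \<Rightarrow> 'a set \<Rightarrow> bool" where
  "order_closed_in S A \<longleftrightarrow>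
     (\<forall>N::'a filter. \<forall>f. N \<noteq> bot \<and> eventually (\<lambda>y. y \<in> A) N \<and>
        order_conv_in S (\<lambda>y. y) N f \<longrightarrow> f \<in> A)"

definition order_closure_in :: "'a::{ordered_real_vector,lattice} set \<Rightarrow> 'a set \<Rightarrow> 'a set" where
  "order_closure_in S E = \<Inter>{A. A \<subseteq> S \<and> E \<subseteq> A \<and> order_closed_in S A}"

end

theory Submission
  imports Defs
begin

lemma add_sup_r: "sup a b + (c::'a::{ordered_real_vector,lattice}) = sup (a + c) (b + c)"
proof (rule antisym)
  show "sup (a + c) (b + c) \<le> sup a b + c" by (simp add: add_right_mono)
  have "a \<le> sup (a + c) (b + c) - c" "b \<le> sup (a + c) (b + c) - c"
    by (simp_all add: le_diff_eq)
  then have "sup a b \<le> sup (a + c) (b + c) - c" by (rule sup_least)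
  then show "sup a b + c \<le> sup (a + c) (b + c)" using le_diff_eq by blast
qed

lemma add_inf_r: "inf a b + (c::'a::{ordered_real_vector,lattice}) = inf (a + c) (b + c)"
proof (rule antisym)
  show "inf a b + c \<le> inf (a + c) (b + c)" by (simp add: add_right_mono)
  have "inf (a + c) (b + c) - c \<le> a" "inf (a + c) (b + c) - c \<le> b"
    by (simp_all add: diff_le_eq)
  then have "inf (a + c) (b + c) - c \<le> inf a b" by (rule inf_greatest)
  then show "inf (a + c) (b + c) \<le> inf a b + c" using diff_le_eq by blast
qed

lemma neg_sup: "- sup a (b::'a::{ordered_real_vector,lattice}) = inf (- a) (- b)"
proof (rule antisym)
  show "- sup a b \<le> inf (- a) (- b)" by simp
  have "- inf (- a) (- b) \<ge> a" by (metis inf_le1 le_minus_iff)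
  have "- inf (- a) (- b) \<ge> b" by (metis inf_le2 le_minus_iff)
  then have "sup a b \<le> - inf (- a) (- b)" using \<open>- inf (- a) (- b) \<ge> a\<close> by simp
  then show "inf (- a) (- b) \<le> - sup a b" by (simp add: le_minus_iff)
qed

lemma neg_inf: "- inf a (b::'a::{ordered_real_vector,lattice}) = sup (- a) (- b)"
proof -
  have "- sup (- a) (- b) = inf a b" by (simp add: neg_sup)
  then show ?thesis by (metis minus_minus)
qed

lemma diff_inf_eq: "y - inf y (x::'a::{ordered_real_vector,lattice}) = sup 0 (y - x)"
proof -
  have "y - inf y x = sup (- y) (- x) + y" by (simp add: neg_inf[symmetric])
  also have "\<dots> = sup 0 (y - x)" by (simp add: add_sup_r)
  finally show ?thesis .
qed

lemma pos_neg_disj: "inf (sup 0 t) (sup 0 (- (t::'a::{ordered_real_vector,lattice}))) = 0"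
proof -
  have 1: "sup 0 t = sup 0 (- t) + t"
  proof -
    have "sup 0 (- t) + t = sup (0 + t) (- t + t)" by (rule add_sup_r)
    also have "\<dots> = sup t 0" by simp
    finally show ?thesis by (simp add: sup.commute)
  qed
  have "inf (sup 0 t) (sup 0 (- t)) = inf (sup 0 (- t) + t) (sup 0 (- t) + 0)" using 1 by simp
  also have "\<dots> = sup 0 (- t) + inf t 0" by (simp add: add_inf_r add.commute)
  also have "inf t 0 = - sup 0 (- t)" by (simp add: neg_sup inf_commute)
  finally show ?thesis by simp
qed

lemma pos_minus_neg: "sup x 0 - sup (- x) (0::'a::{ordered_real_vector,lattice}) = x"
proof -
  have "sup (- x) 0 + x = sup (- x + x) (0 + x)" by (rule add_sup_r)
  also have "\<dots> = sup 0 x" by simp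
  finally have "sup x 0 = sup (- x) 0 + x" by (simp add: sup.commute)
  then show ?thesis by simp
qed

lemma inf_subadd:
  fixes a b c :: "'a::{ordered_real_vector,lattice}"
  assumes "0 \<le> a" "0 \<le> b" "0 \<le> c"
  shows "inf (a + b) c \<le> inf a c + inf b c"
proof -
  define d where "d = inf (a + b) c"
  have "d - inf a c = sup (- a) (- c) + d"
    by (simp add: neg_inf[symmetric])
  also have "\<dots> = sup (d - a) (d - c)" by (simp add: add_sup_r)
  also have "\<dots> \<le> b"
  proof (rule sup_least)
    show "d - a \<le> b" unfolding d_def by (simp add: diff_le_eq add.commute le_infI1)
    show "d - c \<le> b" using assms unfolding d_def by (simp add: diff_le_eq add_increasing)
  qed
  finally have 1: "d - inf a c \<le> b" .
  have "d - inf a c \<le> c" using assms by (simp add: d_def diff_le_eq le_infI2 add_increasing)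
  with 1 have "d - inf a c \<le> inf b c" by simp
  then show ?thesis unfolding d_def using diff_le_eq add.commute by metis
qed

lemma inf_scale_nat:
  fixes q u :: "'a::{ordered_real_vector,lattice}"
  assumes "0 \<le> q" "0 \<le> u"
  shows "inf (real n *\<^sub>R q) u \<le> real n *\<^sub>R inf q u"
proof (induction n)
  case 0 then show ?case using assms by (simp add: le_infI2)
next
  case (Suc n)
  have "inf (real (Suc n) *\<^sub>R q) u = inf (real n *\<^sub>R q + q) u" by (simp add: algebra_simps)
  also have "\<dots> \<le> inf (real n *\<^sub>R q) u + inf q u"
    using assms by (intro inf_subadd) (auto intro: scaleR_nonneg_nonneg)
  also have "\<dots> \<le> real n *\<^sub>R inf q u + inf q u" using Suc by simp
  finally show ?case by (simp add: algebra_simps)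
qed


lemma sup_bound:
  fixes f x g c :: "'a::{ordered_real_vector,lattice}"
  assumes "0 \<le> g" "f - g \<le> x" "x \<le> f + g"
  shows "sup f c - g \<le> sup x c \<and> sup x c \<le> sup f c + g"
proof
  have "sup f c - g = sup (f - g) (c - g)" using add_sup_r[of f c "- g"] by simp
  also have "\<dots> \<le> sup x c"
  proof (rule sup_least)
    show "f - g \<le> sup x c" using assms(2) by (rule le_supI1)
    have "c - g \<le> c" using assms(1) by (simp add: diff_le_eq)
    then show "c - g \<le> sup x c" by (rule le_supI2)
  qed
  finally show "sup f c - g \<le> sup x c" .
  have "sup x c \<le> sup (f + g) (c + g)" using assms by (auto intro: le_supI1 le_supI2 simp: add_increasing2)
  also have "\<dots> = sup f c + g" by (simp add: add_sup_r)
  finally show "sup x c \<le> sup f c + g" .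
qed

lemma inf_bound:
  fixes f x g c :: "'a::{ordered_real_vector,lattice}"
  assumes "0 \<le> g" "f - g \<le> x" "x \<le> f + g"
  shows "inf f c - g \<le> inf x c \<and> inf x c \<le> inf f c + g"
proof
  have "inf f c - g = inf (f - g) (c - g)" using add_inf_r[of f c "- g"] by simp
  also have "\<dots> \<le> inf x c" using assms by (auto intro: le_infI1 le_infI2 simp: diff_le_eq add_increasing)
  finally show "inf f c - g \<le> inf x c" .
  have "inf x c \<le> inf (f + g) (c + g)" using assms by (auto intro: le_infI1 le_infI2 simp: add_increasing2)
  also have "\<dots> = inf f c + g" by (simp add: add_inf_r)
  finally show "inf x c \<le> inf f c + g" .
qed

lemma vabs_nonneg: "0 \<le> vabs (x::'a::{ordered_real_vector,lattice})"
proof -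
  define s where "s = vabs x"
  have "x \<le> s" "- x \<le> s" by (simp_all add: s_def vabs_def)
  then have "x + - x \<le> s + s" by (rule add_mono)
  then have h: "0 \<le> s + s" by simp
  have "0 \<le> (1/2::real) *\<^sub>R (s + s)" using h by (intro scaleR_nonneg_nonneg) simp_all
  also have "(1/2::real) *\<^sub>R (s + s) = (1/2::real) *\<^sub>R s + (1/2::real) *\<^sub>R s" by (rule scaleR_add_right)
  also have "\<dots> = (1/2 + 1/2::real) *\<^sub>R s" by (rule scaleR_add_left[symmetric])
  also have "\<dots> = s" by simp
  finally show ?thesis by (simp add: s_def)
qed

lemma vabs_tri: "vabs y \<le> vabs x + vabs (y - (x::'a::{ordered_real_vector,lattice}))"
proof -
  have "y = x + (y - x)" by simp
  have 1: "y \<le> vabs x + vabs (y - x)"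
  proof -
    have "x \<le> vabs x" "y - x \<le> vabs (y - x)" by (simp_all add: vabs_def)
    then have "x + (y - x) \<le> vabs x + vabs (y - x)" by (rule add_mono)
    then show ?thesis by simp
  qed
  have 2: "- y \<le> vabs x + vabs (y - x)"
  proof -
    have "- x \<le> vabs x" "- (y - x) \<le> vabs (y - x)" by (simp_all add: vabs_def)
    then have "- x + - (y - x) \<le> vabs x + vabs (y - x)" by (rule add_mono)
    then show ?thesis by simp
  qed
  show ?thesis using 1 2 by (simp add: vabs_def)
qed

lemma vabs_le: "f - g \<le> x \<Longrightarrow> x \<le> f + g \<Longrightarrow> vabs (f - x) \<le> (g::'a::{ordered_real_vector,lattice})"
  by (simp add: vabs_def diff_le_eq add.commute)

lemma vabs_pos: "0 \<le> y \<Longrightarrow> vabs y = (y::'a::{ordered_real_vector,lattice})"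
  unfolding vabs_def by (rule sup_absorb1) (rule order_trans[of _ 0], simp_all)

section \<open>Riesz subspaces\<close>

lemma rs_0: "riesz_subspace S \<Longrightarrow> 0 \<in> S" by (simp add: riesz_subspace_def)
lemma rs_add: "riesz_subspace S \<Longrightarrow> x \<in> S \<Longrightarrow> y \<in> S \<Longrightarrow> x + y \<in> S" by (simp add: riesz_subspace_def)
lemma rs_scale: "riesz_subspace S \<Longrightarrow> x \<in> S \<Longrightarrow> c *\<^sub>R x \<in> S" by (simp add: riesz_subspace_def)
lemma rs_sup: "riesz_subspace S \<Longrightarrow> x \<in> S \<Longrightarrow> y \<in> S \<Longrightarrow> sup x y \<in> S" by (simp add: riesz_subspace_def)
lemma rs_inf: "riesz_subspace S \<Longrightarrow> x \<in> S \<Longrightarrow> y \<in> S \<Longrightarrow> inf x y \<in> S" by (simp add: riesz_subspace_def)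
lemma rs_neg: "riesz_subspace S \<Longrightarrow> x \<in> S \<Longrightarrow> - x \<in> S"
  using rs_scale[of S x "-1"] by simp
lemma rs_diff: "riesz_subspace S \<Longrightarrow> x \<in> S \<Longrightarrow> y \<in> S \<Longrightarrow> x - y \<in> S"
  using rs_add[of S x "- y"] rs_neg[of S y] by simp
lemma rs_vabs: "riesz_subspace S \<Longrightarrow> x \<in> S \<Longrightarrow> vabs x \<in> S"
  by (simp add: vabs_def rs_sup rs_neg)
lemma rs_UNIV: "riesz_subspace (UNIV::'a::{ordered_real_vector,lattice} set)"
  by (simp add: riesz_subspace_def)

section \<open>Closure basics\<close>

lemma closed_self: "order_closed_in S S"
  by (auto simp: order_closed_in_def order_conv_in_def)

lemma cl_ext: "E \<subseteq> order_closure_in S E"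
  by (auto simp: order_closure_in_def)

lemma cl_sub: "E \<subseteq> S \<Longrightarrow> order_closure_in S E \<subseteq> S"
  unfolding order_closure_in_def using closed_self[of S] by blast

lemma cl_min: "A \<subseteq> S \<Longrightarrow> E \<subseteq> A \<Longrightarrow> order_closed_in S A \<Longrightarrow> order_closure_in S E \<subseteq> A"
  unfolding order_closure_in_def by blast

lemma cl_closed: "order_closed_in S (order_closure_in S E)"
  unfolding order_closed_in_def
proof (intro allI impI)
  fix N :: "'a filter" and f
  assume a: "N \<noteq> bot \<and> eventually (\<lambda>y. y \<in> order_closure_in S E) N \<and> order_conv_in S (\<lambda>y. y) N f"
  show "f \<in> order_closure_in S E"
    unfolding order_closure_in_def
  proof
    fix A assume A: "A \<in> {A. A \<subseteq> S \<and> E \<subseteq> A \<and> order_closed_in S A}"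
    have "eventually (\<lambda>y. y \<in> A) N"
      using a A by (auto elim!: eventually_mono simp: order_closure_in_def)
    with a A show "f \<in> A" by (auto simp: order_closed_in_def)
  qed
qed

lemma closed_mem:
  "order_closed_in S A \<Longrightarrow> N \<noteq> bot \<Longrightarrow> eventually (\<lambda>y. y \<in> A) N \<Longrightarrow> order_conv_in S (\<lambda>y. y) N f \<Longrightarrow> f \<in> A"
  by (auto simp: order_closed_in_def)

lemma conv_map:
  fixes h :: "'a::{ordered_real_vector,lattice} \<Rightarrow> 'a"
  assumes conv: "order_conv_in S (\<lambda>y. y) N f"
    and hS: "h f \<in> S"
    and hb: "\<And>x g. 0 \<le> g \<Longrightarrow> f - g \<le> x \<Longrightarrow> x \<le> f + g \<Longrightarrow> h f - g \<le> h x \<and> h x \<le> h f + g"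
  shows "order_conv_in S (\<lambda>y. y) (filtermap h N) (h f)"
proof -
  from conv obtain G where G: "G \<subseteq> S" "is_inf_in S G 0"
    "\<forall>g\<in>G. eventually (\<lambda>i. f - g \<le> i \<and> i \<le> f + g) N"
    by (auto simp: order_conv_in_def)
  have "\<forall>g\<in>G. eventually (\<lambda>i. h f - g \<le> i \<and> i \<le> h f + g) (filtermap h N)"
  proof
    fix g assume g: "g \<in> G"
    then have "0 \<le> g" using G(2) by (auto simp: is_inf_in_def)
    show "eventually (\<lambda>i. h f - g \<le> i \<and> i \<le> h f + g) (filtermap h N)"
      unfolding eventually_filtermap using G(3) g hb[OF \<open>0 \<le> g\<close>]
      by (auto elim!: eventually_mono)
  qed
  with G hS show ?thesis by (auto simp: order_conv_in_def)
qed

lemma conv_scale: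
  fixes c :: real
  assumes S: "riesz_subspace S" and conv: "order_conv_in S (\<lambda>y. y) N (f::'a::{ordered_real_vector,lattice})"
  shows "order_conv_in S (\<lambda>y. y) (filtermap (\<lambda>x. c *\<^sub>R x) N) (c *\<^sub>R f)"
proof -
  from conv obtain G where G: "f \<in> S" "G \<subseteq> S" "is_inf_in S G 0"
    "\<forall>g\<in>G. eventually (\<lambda>i. f - g \<le> i \<and> i \<le> f + g) N"
    by (auto simp: order_conv_in_def)
  have cfS: "c *\<^sub>R f \<in> S" using S G(1) by (rule rs_scale)
  show ?thesis
  proof (cases "c = 0")
    case True
    show ?thesis using G True S by (auto simp: order_conv_in_def eventually_filtermap is_inf_in_def rs_0)
  next
    case False
    define G' where "G' = (\<lambda>g. \<bar>c\<bar> *\<^sub>R g) ` G"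
    have G'S: "G' \<subseteq> S" using G(2) S by (auto simp: G'_def rs_scale)
    have inf': "is_inf_in S G' 0"
      unfolding is_inf_in_def
    proof (intro conjI ballI impI)
      show "0 \<in> S" using S by (rule rs_0)
      fix g assume "g \<in> G'"
      then show "0 \<le> g" using G(3) by (auto simp: G'_def is_inf_in_def intro: scaleR_nonneg_nonneg)
    next
      fix z assume zS: "z \<in> S" and lb: "\<forall>g\<in>G'. z \<le> g"
      have "(1 / \<bar>c\<bar>) *\<^sub>R z \<le> g" if "g \<in> G" for g
      proof -
        have "z \<le> \<bar>c\<bar> *\<^sub>R g" using lb that by (auto simp: G'_def)
        then have "(1 / \<bar>c\<bar>) *\<^sub>R z \<le> (1 / \<bar>c\<bar>) *\<^sub>R (\<bar>c\<bar> *\<^sub>R g)" by (rule scaleR_left_mono) simp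
        then show ?thesis using False by simp
      qed
      then have "(1 / \<bar>c\<bar>) *\<^sub>R z \<le> 0" using G(3) rs_scale[OF S zS] by (auto simp: is_inf_in_def)
      then have "\<bar>c\<bar> *\<^sub>R ((1 / \<bar>c\<bar>) *\<^sub>R z) \<le> \<bar>c\<bar> *\<^sub>R 0" by (rule scaleR_left_mono) simp
      then show "z \<le> 0" using False by simp
    qed
    have ev: "\<forall>g\<in>G'. eventually (\<lambda>i. c *\<^sub>R f - g \<le> i \<and> i \<le> c *\<^sub>R f + g) (filtermap (\<lambda>x. c *\<^sub>R x) N)"
    proof
      fix g' assume "g' \<in> G'"
      then obtain g where g: "g \<in> G" "g' = \<bar>c\<bar> *\<^sub>R g" by (auto simp: G'_def)
      have "c *\<^sub>R f - \<bar>c\<bar> *\<^sub>R g \<le> c *\<^sub>R x \<and> c *\<^sub>R x \<le> c *\<^sub>R f + \<bar>c\<bar> *\<^sub>R g"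
        if "f - g \<le> x \<and> x \<le> f + g" for x
      proof (cases "c \<ge> 0")
        case True
        have "c *\<^sub>R (f - g) \<le> c *\<^sub>R x" "c *\<^sub>R x \<le> c *\<^sub>R (f + g)"
          using that True by (auto intro: scaleR_left_mono)
        then show ?thesis using True by (simp add: scaleR_diff_right scaleR_add_right)
      next
        case nc: False
        have "c *\<^sub>R (f + g) \<le> c *\<^sub>R x" "c *\<^sub>R x \<le> c *\<^sub>R (f - g)"
          using that nc by (auto intro: scaleR_left_mono_neg)
        then show ?thesis using nc by (simp add: scaleR_diff_right scaleR_add_right)
      qed
      then show "eventually (\<lambda>i. c *\<^sub>R f - g' \<le> i \<and> i \<le> c *\<^sub>R f + g') (filtermap (\<lambda>x. c *\<^sub>R x) N)"
        unfolding eventually_filtermap using G(4) g by (auto elim!: eventually_mono)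
    qed
    show ?thesis using cfS G'S inf' ev by (auto simp: order_conv_in_def)
  qed
qed

lemma cl_stable:
  assumes ES: "E \<subseteq> S"
    and cont: "\<And>N f. order_conv_in S (\<lambda>y. y) N f \<Longrightarrow> order_conv_in S (\<lambda>y. y) (filtermap h N) (h f)"
    and hE: "\<And>x. x \<in> E \<Longrightarrow> h x \<in> order_closure_in S E"
    and x: "x \<in> order_closure_in S E"
  shows "h x \<in> order_closure_in S E"
proof -
  let ?K = "order_closure_in S E"
  let ?A = "{x \<in> ?K. h x \<in> ?K}"
  have "?K \<subseteq> ?A"
  proof (rule cl_min)
    show "?A \<subseteq> S" using cl_sub[OF ES] by blast
    show "E \<subseteq> ?A" using cl_ext[of E S] hE by blast
    show "order_closed_in S ?A"
      unfolding order_closed_in_def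
    proof (intro allI impI)
      fix N :: "'a filter" and f
      assume a: "N \<noteq> bot \<and> eventually (\<lambda>y. y \<in> ?A) N \<and> order_conv_in S (\<lambda>y. y) N f"
      have fK: "f \<in> ?K"
        by (rule closed_mem[OF cl_closed]) (use a in \<open>auto elim: eventually_mono\<close>)
      have "h f \<in> ?K"
      proof (rule closed_mem[OF cl_closed])
        show "filtermap h N \<noteq> bot" using a by (simp add: filtermap_bot_iff)
        show "eventually (\<lambda>y. y \<in> ?K) (filtermap h N)"
          unfolding eventually_filtermap using a by (auto elim: eventually_mono)
        show "order_conv_in S (\<lambda>y. y) (filtermap h N) (h f)" using a cont by blast
      qed
      with fK show "f \<in> ?A" by blast
    qed
  qed
  with x show ?thesis by blast
qed

lemma conv_in: "order_conv_in S (\<lambda>y. y) N f \<Longrightarrow> f \<in> S"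
  by (simp add: order_conv_in_def)

lemma conv_add:
  assumes "order_conv_in S (\<lambda>y. y) N f" "f + c \<in> S"
  shows "order_conv_in S (\<lambda>y. y) (filtermap (\<lambda>x. x + c) N) (f + (c::'a::{ordered_real_vector,lattice}))"
  by (rule conv_map[where h="\<lambda>x. x + c", OF assms]) (simp add: algebra_simps)

lemma conv_sup:
  assumes "order_conv_in S (\<lambda>y. y) N f" "sup f c \<in> S"
  shows "order_conv_in S (\<lambda>y. y) (filtermap (\<lambda>x. sup x c) N) (sup f (c::'a::{ordered_real_vector,lattice}))"
  by (rule conv_map[where h="\<lambda>x. sup x c", OF assms]) (rule sup_bound)

lemma conv_inf:
  assumes "order_conv_in S (\<lambda>y. y) N f" "inf f c \<in> S"
  shows "order_conv_in S (\<lambda>y. y) (filtermap (\<lambda>x. inf x c) N) (inf f (c::'a::{ordered_real_vector,lattice}))"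
  by (rule conv_map[where h="\<lambda>x. inf x c", OF assms]) (rule inf_bound)

lemma cl_riesz:
  fixes S E :: "'a::{ordered_real_vector,lattice} set"
  assumes S: "riesz_subspace S" and E: "riesz_subspace E" and ES: "E \<subseteq> S"
  shows "riesz_subspace (order_closure_in S E)"
proof -
  let ?K = "order_closure_in S E"
  have KS: "?K \<subseteq> S" by (rule cl_sub[OF ES])
  have EK: "E \<subseteq> ?K" by (rule cl_ext)
  have add1: "x + c \<in> ?K" if "c \<in> E" "x \<in> ?K" for c x
  proof (rule cl_stable[OF ES _ _ that(2), where h = "\<lambda>x. x + c"])
    fix N f assume cv: "order_conv_in S (\<lambda>y. y) N f"
    show "order_conv_in S (\<lambda>y. y) (filtermap (\<lambda>x. x + c) N) (f + c)"
      by (rule conv_add[OF cv]) (use that ES S conv_in[OF cv] in \<open>auto intro: rs_add\<close>)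
  next
    fix x assume "x \<in> E" then show "x + c \<in> ?K" using that E EK by (auto intro: rs_add)
  qed
  have add2: "x + c \<in> ?K" if "c \<in> ?K" "x \<in> ?K" for c x
  proof (rule cl_stable[OF ES _ _ that(2), where h = "\<lambda>x. x + c"])
    fix N f assume cv: "order_conv_in S (\<lambda>y. y) N f"
    show "order_conv_in S (\<lambda>y. y) (filtermap (\<lambda>x. x + c) N) (f + c)"
      by (rule conv_add[OF cv]) (use that KS S conv_in[OF cv] in \<open>auto intro: rs_add\<close>)
  next
    fix x assume "x \<in> E" then show "x + c \<in> ?K" using add1[OF \<open>x \<in> E\<close> that(1)] by (simp add: add.commute)
  qed
  have sup1: "sup x c \<in> ?K" if "c \<in> E" "x \<in> ?K" for c x
  proof (rule cl_stable[OF ES _ _ that(2), where h = "\<lambda>x. sup x c"])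
    fix N f assume cv: "order_conv_in S (\<lambda>y. y) N f"
    show "order_conv_in S (\<lambda>y. y) (filtermap (\<lambda>x. sup x c) N) (sup f c)"
      by (rule conv_sup[OF cv]) (use that ES S conv_in[OF cv] in \<open>auto intro: rs_sup\<close>)
  next
    fix x assume "x \<in> E" then show "sup x c \<in> ?K" using that E EK by (auto intro: rs_sup)
  qed
  have sup2: "sup x c \<in> ?K" if "c \<in> ?K" "x \<in> ?K" for c x
  proof (rule cl_stable[OF ES _ _ that(2), where h = "\<lambda>x. sup x c"])
    fix N f assume cv: "order_conv_in S (\<lambda>y. y) N f"
    show "order_conv_in S (\<lambda>y. y) (filtermap (\<lambda>x. sup x c) N) (sup f c)"
      by (rule conv_sup[OF cv]) (use that KS S conv_in[OF cv] in \<open>auto intro: rs_sup\<close>)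
  next
    fix x assume "x \<in> E" then show "sup x c \<in> ?K" using sup1[OF \<open>x \<in> E\<close> that(1)] by (simp add: sup_commute)
  qed
  have inf1: "inf x c \<in> ?K" if "c \<in> E" "x \<in> ?K" for c x
  proof (rule cl_stable[OF ES _ _ that(2), where h = "\<lambda>x. inf x c"])
    fix N f assume cv: "order_conv_in S (\<lambda>y. y) N f"
    show "order_conv_in S (\<lambda>y. y) (filtermap (\<lambda>x. inf x c) N) (inf f c)"
      by (rule conv_inf[OF cv]) (use that ES S conv_in[OF cv] in \<open>auto intro: rs_inf\<close>)
  next
    fix x assume "x \<in> E" then show "inf x c \<in> ?K" using that E EK by (auto intro: rs_inf)
  qed
  have inf2: "inf x c \<in> ?K" if "c \<in> ?K" "x \<in> ?K" for c x
  proof (rule cl_stable[OF ES _ _ that(2), where h = "\<lambda>x. inf x c"])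
    fix N f assume cv: "order_conv_in S (\<lambda>y. y) N f"
    show "order_conv_in S (\<lambda>y. y) (filtermap (\<lambda>x. inf x c) N) (inf f c)"
      by (rule conv_inf[OF cv]) (use that KS S conv_in[OF cv] in \<open>auto intro: rs_inf\<close>)
  next
    fix x assume "x \<in> E" then show "inf x c \<in> ?K" using inf1[OF \<open>x \<in> E\<close> that(1)] by (simp add: inf_commute)
  qed
  have sc: "c *\<^sub>R x \<in> ?K" if "x \<in> ?K" for c x
  proof (rule cl_stable[OF ES _ _ that, where h = "\<lambda>x. c *\<^sub>R x"])
    fix N f assume "order_conv_in S (\<lambda>y. y) N f"
    then show "order_conv_in S (\<lambda>y. y) (filtermap (\<lambda>x. c *\<^sub>R x) N) (c *\<^sub>R f)"
      by (rule conv_scale[OF S])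
  next
    fix x assume "x \<in> E" then show "c *\<^sub>R x \<in> ?K" using E EK by (auto intro: rs_scale)
  qed
  have "0 \<in> ?K" using rs_0[OF E] EK by blast
  then show ?thesis unfolding riesz_subspace_def
    using add2 sup2 inf2 sc by simp
qed

lemma dir_in_closed:
  fixes D :: "'a::{ordered_real_vector,lattice} set"
  assumes K: "order_closed_in S K" and DK: "D \<subseteq> K" and Dne: "D \<noteq> {}"
    and dir: "\<And>a b. a \<in> D \<Longrightarrow> b \<in> D \<Longrightarrow> \<exists>c\<in>D. a \<le> c \<and> b \<le> c"
    and sS: "s \<in> S" and ub: "\<forall>d\<in>D. d \<le> s" and imS: "(\<lambda>d. s - d) ` D \<subseteq> S"
    and inf0: "is_inf_in S ((\<lambda>d. s - d) ` D) 0"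
  shows "s \<in> K"
proof -
  define N where "N = (INF d\<in>D. principal {z\<in>D. d \<le> z})"
  have evN: "eventually P N \<longleftrightarrow> (\<exists>d\<in>D. \<forall>z\<in>D. d \<le> z \<longrightarrow> P z)" for P
    unfolding N_def
  proof (subst eventually_INF_base)
    show "D \<noteq> {}" by (rule Dne)
    fix a b assume "a \<in> D" "b \<in> D"
    then obtain c where "c \<in> D" "a \<le> c" "b \<le> c" using dir by blast
    then show "\<exists>x\<in>D. principal {z \<in> D. x \<le> z} \<le> inf (principal {z \<in> D. a \<le> z}) (principal {z \<in> D. b \<le> z})"
      by (auto intro!: bexI[of _ c])
  qed (auto simp: eventually_principal)
  have "N \<noteq> bot"
  proof
    assume "N = bot"
    then have "eventually (\<lambda>x. False) N" by simp
    then show False unfolding evN by blast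
  qed
  moreover have "eventually (\<lambda>y. y \<in> K) N" unfolding evN using Dne DK by blast
  moreover have "order_conv_in S (\<lambda>y. y) N s"
    unfolding order_conv_in_def
  proof (intro conjI exI[of _ "(\<lambda>d. s - d) ` D"])
    show "s \<in> S" by (rule sS)
    show "(\<lambda>d. s - d) ` D \<subseteq> S" by (rule imS)
    show "is_inf_in S ((\<lambda>d. s - d) ` D) 0" by (rule inf0)
    show "\<forall>g\<in>(\<lambda>d. s - d) ` D. eventually (\<lambda>i. s - g \<le> i \<and> i \<le> s + g) N"
    proof
      fix g assume "g \<in> (\<lambda>d. s - d) ` D"
      then obtain d where d: "d \<in> D" "g = s - d" by blast
      show "eventually (\<lambda>i. s - g \<le> i \<and> i \<le> s + g) N"
        unfolding evN
      proof (intro bexI[OF _ d(1)] ballI impI)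
        fix z assume "z \<in> D" "d \<le> z"
        then show "s - g \<le> z \<and> z \<le> s + g" using d ub
          by (auto simp: add_increasing2 intro: order_trans[of z s])
      qed
    qed
  qed
  ultimately show ?thesis using K by (rule closed_mem[rotated])
qed


lemma sup_to_inf:
  fixes D :: "'a::{ordered_real_vector,lattice} set"
  assumes "is_sup_in UNIV D s" "0 \<in> S" "(\<lambda>d. s - d) ` D \<subseteq> S"
  shows "is_inf_in S ((\<lambda>d. s - d) ` D) 0"
  unfolding is_inf_in_def
proof (intro conjI ballI impI)
  show "0 \<in> S" by (rule assms(2))
  fix g assume "g \<in> (\<lambda>d. s - d) ` D"
  then show "0 \<le> g" using assms(1) by (auto simp: is_sup_in_def)
next
  fix z assume "z \<in> S" and lb: "\<forall>g\<in>(\<lambda>d. s - d) ` D. z \<le> g"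
  have "d \<le> s - z" if "d \<in> D" for d
    using lb that by (auto simp: le_diff_eq diff_le_eq add.commute)
  then have "s \<le> s - z" using assms(1) by (auto simp: is_sup_in_def)
  then show "z \<le> 0" by (simp add: le_diff_eq)
qed

locale vsetting =
  fixes F E :: "'a::{ordered_real_vector,lattice} set"
  assumes Fu: "universally_complete (UNIV :: 'a set)"
    and F_sub: "riesz_subspace F"
    and F_dense: "order_dense_in (UNIV :: 'a set) F"
    and E_sub: "riesz_subspace E"
    and EF: "E \<subseteq> F"
    and E_reg: "regular_in F E"
begin

definition "C = order_closure_in UNIV E"

lemma sup_ex:
  fixes A :: "'a set"
  assumes "A \<noteq> {}" "\<forall>a\<in>A. a \<le> u"
  shows "\<exists>s. is_sup_in UNIV A s"
proof -
  have oc: "order_complete_on (UNIV::'a set)" using Fu by (simp add: universally_complete_def)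
  have "A \<subseteq> UNIV \<and> A \<noteq> {} \<and> (\<exists>u\<in>UNIV. \<forall>a\<in>A. a \<le> u)" using assms by blast
  then show ?thesis using oc unfolding order_complete_on_def by blast
qed

lemma inf_ex:
  fixes A :: "'a set"
  assumes "A \<noteq> {}" "\<forall>a\<in>A. l \<le> a"
  shows "\<exists>w. is_inf_in UNIV A w"
proof -
  let ?B = "uminus ` A"
  have B1: "?B \<noteq> {}" using assms(1) by simp
  have B2: "\<forall>b\<in>?B. b \<le> - l" using assms(2) by auto
  obtain s where s: "is_sup_in UNIV ?B s" using sup_ex[OF B1 B2] by (elim exE)
  have "is_inf_in UNIV A (- s)"
    unfolding is_inf_in_def
  proof (intro conjI ballI allI impI)
    show "- s \<in> UNIV" by simp
  next
    fix a assume a: "a \<in> A"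
    then have "- a \<in> ?B" by (rule imageI)
    then have "- a \<le> s" using s unfolding is_sup_in_def by blast
    then have "- s \<le> - (- a)" by (simp only: neg_le_iff_le)
    then show "- s \<le> a" by simp
  next
    fix z assume z: "\<forall>g\<in>A. z \<le> g"
    have "\<forall>g\<in>?B. g \<le> - z"
    proof
      fix g assume "g \<in> ?B"
      then obtain a where "a \<in> A" "g = - a" by blast
      then show "g \<le> - z" using z by simp
    qed
    then have "s \<le> - z" using s unfolding is_sup_in_def by blast
    then have "- (- z) \<le> - s" by (simp only: neg_le_iff_le)
    then show "z \<le> - s" by simp
  qed
  then show ?thesis by blast
qed

lemma arch:
  fixes x y :: 'a
  assumes "0 \<le> x" "\<forall>n. real n *\<^sub>R x \<le> y"
  shows "x = 0"
proof -
  obtain s where s: "is_sup_in UNIV (range (\<lambda>n. real n *\<^sub>R x)) s"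
    using sup_ex[of "range (\<lambda>n. real n *\<^sub>R x)" y] assms by auto
  have "real n *\<^sub>R x \<le> s - x" for n
  proof -
    have "real (Suc n) *\<^sub>R x \<le> s" using s unfolding is_sup_in_def by blast
    moreover have "real (Suc n) *\<^sub>R x = real n *\<^sub>R x + x" by (simp add: algebra_simps)
    ultimately show ?thesis by (simp add: le_diff_eq)
  qed
  then have "s \<le> s - x" using s by (auto simp: is_sup_in_def)
  then have "x \<le> 0" by (simp add: le_diff_eq)
  with assms(1) show ?thesis by simp
qed

lemma F_regU:
  assumes "G \<subseteq> F" "is_inf_in F G 0"
  shows "is_inf_in UNIV G 0"
  unfolding is_inf_in_def
proof (intro conjI ballI impI)
  fix g assume "g \<in> G" then show "0 \<le> g" using assms by (auto simp: is_inf_in_def)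
next
  fix y assume lb: "\<forall>g\<in>G. y \<le> g"
  let ?p = "sup y 0"
  have pg: "?p \<le> g" if "g \<in> G" for g
    using lb that assms by (auto simp: is_inf_in_def)
  have "?p = 0"
  proof (rule ccontr)
    assume "?p \<noteq> 0"
    then have "0 < ?p" by (simp add: order_less_le)
    then obtain f where f: "f \<in> F" "0 < f" "f \<le> ?p" using F_dense by (auto simp: order_dense_in_def)
    then have "\<forall>g\<in>G. f \<le> g" using pg f(3) order.trans by blast
    then have "f \<le> 0" using assms(2) f(1) unfolding is_inf_in_def by blast
    with f show False by simp
  qed
  then show "y \<le> 0" using sup_ge1[of y 0] by simp
qed simp

lemma E_regU:
  assumes "G \<subseteq> E" "is_inf_in E G 0"
  shows "is_inf_in UNIV G 0"
proof -
  have "is_inf_in F G 0" using E_reg assms unfolding regular_in_def by blast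
  moreover have "G \<subseteq> F" using assms(1) EF by blast
  ultimately show ?thesis using F_regU by blast
qed

lemma C_riesz: "riesz_subspace C"
  unfolding C_def using cl_riesz[OF rs_UNIV E_sub] by simp

lemma EC: "E \<subseteq> C" unfolding C_def by (rule cl_ext)

lemma C_closed: "order_closed_in UNIV C" unfolding C_def by (rule cl_closed)

lemma C_sup:
  assumes AC: "A \<subseteq> C" and Ane: "A \<noteq> {}" and s: "is_sup_in UNIV A s"
  shows "s \<in> C"
proof -
  define D where "D = {x \<in> C. (\<exists>a\<in>A. a \<le> x) \<and> x \<le> s}"
  have AD: "A \<subseteq> D" using AC s by (auto simp: D_def is_sup_in_def)
  have Ds: "is_sup_in UNIV D s"
    unfolding is_sup_in_def
  proof (intro conjI ballI allI impI)
    fix v assume "\<forall>g\<in>D. g \<le> v"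
    then have "\<forall>g\<in>A. g \<le> v" using AD by blast
    then show "s \<le> v" using s by (auto simp: is_sup_in_def)
  qed (auto simp: D_def)
  show ?thesis
  proof (rule dir_in_closed[OF C_closed, of D])
    show "D \<subseteq> C" by (auto simp: D_def)
    show "D \<noteq> {}" using AD Ane by blast
    fix a b assume "a \<in> D" "b \<in> D"
    then show "\<exists>c\<in>D. a \<le> c \<and> b \<le> c"
      by (intro bexI[of _ "sup a b"]) (auto simp: D_def intro: rs_sup[OF C_riesz] le_supI1)
  next
    show "s \<in> UNIV" by simp
    show "\<forall>d\<in>D. d \<le> s" by (auto simp: D_def)
    show "(\<lambda>d. s - d) ` D \<subseteq> UNIV" by simp
    show "is_inf_in UNIV ((\<lambda>d. s - d) ` D) 0" using sup_to_inf[OF Ds] by simp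
  qed
qed

lemma C_complete: "order_complete_on C"
  unfolding order_complete_on_def
proof (intro allI impI)
  fix A assume a0: "A \<subseteq> C" and a1: "A \<noteq> {} \<and> (\<exists>u\<in>C. \<forall>a\<in>A. a \<le> u)"
  note a = a0 a1
  then obtain s where s: "is_sup_in UNIV A s" using sup_ex by blast
  then have "s \<in> C" using C_sup a by blast
  then have "is_sup_in C A s" using s by (auto simp: is_sup_in_def)
  then show "\<exists>s. is_sup_in C A s" by blast
qed

lemma C_ub: "\<forall>D\<subseteq>C. pairwise_disjoint D \<longrightarrow> order_bounded_in C D"
proof (intro allI impI)
  fix D assume D: "D \<subseteq> C" "pairwise_disjoint D"
  show "order_bounded_in C D"
  proof (cases "D = {}")
    case True then show ?thesis using rs_0[OF C_riesz] by (auto simp: order_bounded_in_def)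
  next
    case False
    obtain a b where ab: "\<forall>x\<in>D. a \<le> x \<and> x \<le> b"
      using Fu D unfolding universally_complete_def order_bounded_in_def by blast
    obtain s where s: "is_sup_in UNIV D s" using sup_ex[OF False] ab by blast
    have sC: "s \<in> C" by (rule C_sup[OF D(1) False s])
    have nD: "uminus ` D \<subseteq> C" using D(1) rs_neg[OF C_riesz] by auto
    obtain t where t: "is_sup_in UNIV (uminus ` D) t"
      using sup_ex[of "uminus ` D" "- a"] ab False by auto
    have tC: "t \<in> C" by (rule C_sup[OF nD]) (use False t in auto)
    have "\<forall>x\<in>D. - t \<le> x \<and> x \<le> s"
    proof
      fix x assume x: "x \<in> D"
      have "- x \<le> t" using t x unfolding is_sup_in_def by blast
      then have "- t \<le> - (- x)" by (simp only: neg_le_iff_le)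
      moreover have "x \<le> s" using s x unfolding is_sup_in_def by blast
      ultimately show "- t \<le> x \<and> x \<le> s" by simp
    qed
    moreover have "- t \<in> C" using tC rs_neg[OF C_riesz] by blast
    ultimately show ?thesis using sC by (auto simp: order_bounded_in_def)
  qed
qed

lemma C_univ: "universally_complete C"
  unfolding universally_complete_def using C_riesz C_complete C_ub by blast

end

definition trunc :: "'a::{ordered_real_vector,lattice} \<Rightarrow> 'a \<Rightarrow> 'a" where
  "trunc e0 y = sup (inf y e0) (- e0)"

lemma trunc_bounds:
  assumes "0 \<le> (e0::'a::{ordered_real_vector,lattice})"
  shows "- e0 \<le> trunc e0 x \<and> trunc e0 x \<le> e0"
proof
  show "- e0 \<le> trunc e0 x" by (simp add: trunc_def)
  have "- e0 \<le> 0" using assms by simp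
  then have "- e0 \<le> e0" using assms by (rule order_trans)
  then show "trunc e0 x \<le> e0" by (simp add: trunc_def le_infI2)
qed

lemma trunc_lip:
  fixes y x g e0 :: "'a::{ordered_real_vector,lattice}"
  assumes "0 \<le> g" "y - g \<le> x" "x \<le> y + g"
  shows "trunc e0 y - g \<le> trunc e0 x \<and> trunc e0 x \<le> trunc e0 y + g"
proof -
  have "inf y e0 - g \<le> inf x e0 \<and> inf x e0 \<le> inf y e0 + g" using inf_bound[OF assms] .
  then show ?thesis unfolding trunc_def using sup_bound[OF assms(1)] by blast
qed

lemma trunc_pos:
  assumes "0 \<le> y" "0 \<le> (e0::'a::{ordered_real_vector,lattice})"
  shows "trunc e0 y = inf y e0"
proof -
  have "- e0 \<le> 0" using assms by simp
  moreover have "0 \<le> inf y e0" using assms by simp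
  ultimately have "- e0 \<le> inf y e0" by (rule order_trans)
  then show ?thesis unfolding trunc_def by (rule sup_absorb1)
qed

context vsetting
begin

definition "NN = {w. (\<exists>a\<in>E. a \<le> w) \<and> (\<exists>b\<in>E. w \<le> b) \<and> is_inf_in UNIV {b\<in>E. w \<le> b} w}"

definition "Bnd y \<longleftrightarrow> (\<forall>u. 0 \<le> u \<longrightarrow> (\<forall>e\<in>E. 0 \<le> e \<longrightarrow> inf u e = 0) \<longrightarrow> inf (vabs y) u = 0)"

definition "Inv = {y. Bnd y \<and> (\<forall>e0\<in>E. 0 \<le> e0 \<longrightarrow> trunc e0 y \<in> NN)}"

lemma D_inf:
  assumes D_def: "D = {b - a | a b. a \<in> E \<and> a \<le> w \<and> b \<in> E \<and> w \<le> b}"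
    and arch_step: "\<And>p. p \<in> E \<Longrightarrow> 0 \<le> p \<Longrightarrow> (\<forall>d\<in>D. p \<le> d) \<Longrightarrow> p = 0"
  shows "is_inf_in UNIV D 0"
proof (rule E_regU)
  show "D \<subseteq> E" unfolding D_def using rs_diff[OF E_sub] by blast
  show "is_inf_in E D 0"
    unfolding is_inf_in_def
  proof (intro conjI ballI impI)
    show "0 \<in> E" by (rule rs_0[OF E_sub])
    fix d assume "d \<in> D" then show "0 \<le> d" unfolding D_def by auto
  next
    fix z assume zE: "z \<in> E" and lb: "\<forall>d\<in>D. z \<le> d"
    have d0: "\<forall>d\<in>D. 0 \<le> d" unfolding D_def by auto
    let ?p = "sup z 0"
    have "?p \<in> E" using zE rs_sup[OF E_sub] rs_0[OF E_sub] by blast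
    moreover have "0 \<le> ?p" by simp
    moreover have "\<forall>d\<in>D. ?p \<le> d" using lb d0 by simp
    ultimately have "?p = 0" by (rule arch_step)
    then show "z \<le> 0" using sup_ge1[of z 0] by simp
  qed
qed

lemma RL1:
  assumes "w \<in> NN"
  shows "is_sup_in UNIV {a\<in>E. a \<le> w} w"
proof -
  have nn: "(\<exists>a\<in>E. a \<le> w) \<and> (\<exists>b\<in>E. w \<le> b) \<and> is_inf_in UNIV {b\<in>E. w \<le> b} w"
    using assms unfolding NN_def mem_Collect_eq .
  then obtain a0 where a0: "a0 \<in> E" "a0 \<le> w" by blast
  have winf: "is_inf_in UNIV {b\<in>E. w \<le> b} w" using nn by blast
  have ne: "{a\<in>E. a \<le> w} \<noteq> {}" using a0 by blast
  have ub: "\<forall>a\<in>{a\<in>E. a \<le> w}. a \<le> w" by blast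
  from sup_ex[OF ne ub] obtain s where s: "is_sup_in UNIV {a\<in>E. a \<le> w} s" by blast
  define D where "D = {b - a | a b. a \<in> E \<and> a \<le> w \<and> b \<in> E \<and> w \<le> b}"
  have infU: "is_inf_in UNIV D 0"
  proof (rule D_inf[OF D_def])
    fix p assume pE: "p \<in> E" and p0: "0 \<le> p" and pd: "\<forall>d\<in>D. p \<le> d"
    have step: "a + p \<in> E \<and> a + p \<le> w" if "a \<in> E" "a \<le> w" for a
    proof
      show "a + p \<in> E" using that pE rs_add[OF E_sub] by blast
      have "a + p \<le> b" if "b \<in> E" "w \<le> b" for b
      proof -
        have "b - a \<in> D" unfolding D_def using that \<open>a \<in> E\<close> \<open>a \<le> w\<close> by blast
        then have "p \<le> b - a" using pd by blast
        then show ?thesis by (simp add: le_diff_eq add.commute)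
      qed
      then show "a + p \<le> w" using winf \<open>a + p \<in> E\<close> by (auto simp: is_inf_in_def)
    qed
    have "a0 + real n *\<^sub>R p \<in> E \<and> a0 + real n *\<^sub>R p \<le> w" for n
    proof (induction n)
      case 0 then show ?case using a0 by simp
    next
      case (Suc n)
      then have "(a0 + real n *\<^sub>R p) + p \<in> E \<and> (a0 + real n *\<^sub>R p) + p \<le> w" using step by blast
      then show ?case by (simp add: algebra_simps)
    qed
    then have "\<forall>n. real n *\<^sub>R p \<le> w - a0" by (simp add: le_diff_eq add.commute)
    then show "p = 0" using arch p0 by blast
  qed
  have "w - s \<le> d" if "d \<in> D" for d
  proof -
    have "d \<in> {b - a | a b. a \<in> E \<and> a \<le> w \<and> b \<in> E \<and> w \<le> b}" using that unfolding D_def .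
    then obtain a b where ab: "d = b - a" "a \<in> E" "a \<le> w" "b \<in> E" "w \<le> b" by blast
    have "a \<le> s" using s ab by (auto simp: is_sup_in_def)
    then show ?thesis using ab diff_mono[OF \<open>w \<le> b\<close> \<open>a \<le> s\<close>] by simp
  qed
  then have "w - s \<le> 0" using infU unfolding is_inf_in_def by blast
  then have ws: "w \<le> s" by simp
  have "w \<le> v" if "\<forall>g\<in>{a\<in>E. a \<le> w}. g \<le> v" for v
  proof -
    have "s \<le> v" using s that unfolding is_sup_in_def by blast
    with ws show ?thesis by (rule order.trans)
  qed
  then show ?thesis unfolding is_sup_in_def by blast
qed

lemma RL2:
  assumes a0: "a0 \<in> E" "a0 \<le> w" and b0: "b0 \<in> E" "w \<le> b0"
    and wsup: "is_sup_in UNIV {a\<in>E. a \<le> w} w"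
  shows "w \<in> NN"
proof -
  have ne: "{b\<in>E. w \<le> b} \<noteq> {}" using b0 by blast
  have lb: "\<forall>b\<in>{b\<in>E. w \<le> b}. w \<le> b" by blast
  from inf_ex[OF ne lb] obtain t where t: "is_inf_in UNIV {b\<in>E. w \<le> b} t" by blast
  define D where "D = {b - a | a b. a \<in> E \<and> a \<le> w \<and> b \<in> E \<and> w \<le> b}"
  have infU: "is_inf_in UNIV D 0"
  proof (rule D_inf[OF D_def])
    fix p assume pE: "p \<in> E" and p0: "0 \<le> p" and pd: "\<forall>d\<in>D. p \<le> d"
    have step: "b - p \<in> E \<and> w \<le> b - p" if "b \<in> E" "w \<le> b" for b
    proof
      show "b - p \<in> E" using that pE rs_diff[OF E_sub] by blast
      have "a \<le> b - p" if "a \<in> E" "a \<le> w" for a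
      proof -
        have "b - a \<in> D" unfolding D_def using that \<open>b \<in> E\<close> \<open>w \<le> b\<close> by blast
        then have "p \<le> b - a" using pd by blast
        then show ?thesis by (simp add: le_diff_eq add.commute)
      qed
      then show "w \<le> b - p" using wsup \<open>b - p \<in> E\<close> by (auto simp: is_sup_in_def)
    qed
    have "b0 - real n *\<^sub>R p \<in> E \<and> w \<le> b0 - real n *\<^sub>R p" for n
    proof (induction n)
      case 0 then show ?case using b0 by simp
    next
      case (Suc n)
      then have "(b0 - real n *\<^sub>R p) - p \<in> E \<and> w \<le> (b0 - real n *\<^sub>R p) - p" using step by blast
      then show ?case by (simp add: algebra_simps)
    qed
    then have "\<forall>n. real n *\<^sub>R p \<le> b0 - w" by (simp add: le_diff_eq add.commute)
    then show "p = 0" using arch p0 by blast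
  qed
  have "t - w \<le> d" if "d \<in> D" for d
  proof -
    have "d \<in> {b - a | a b. a \<in> E \<and> a \<le> w \<and> b \<in> E \<and> w \<le> b}" using that unfolding D_def .
    then obtain a b where ab: "d = b - a" "a \<in> E" "a \<le> w" "b \<in> E" "w \<le> b" by blast
    have "t \<le> b" using t ab by (auto simp: is_inf_in_def)
    then show ?thesis using ab diff_mono[OF \<open>t \<le> b\<close> \<open>a \<le> w\<close>] by simp
  qed
  then have "t - w \<le> 0" using infU unfolding is_inf_in_def by blast
  then have tw: "t \<le> w" by simp
  have "z \<le> w" if "\<forall>g\<in>{b\<in>E. w \<le> b}. z \<le> g" for z
  proof -
    have "z \<le> t" using t that unfolding is_inf_in_def by blast
    then show ?thesis using tw by (rule order.trans)
  qed
  then have "is_inf_in UNIV {b\<in>E. w \<le> b} w" unfolding is_inf_in_def by blast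
  then show ?thesis using a0 b0 unfolding NN_def by blast
qed

lemma INFNN:
  assumes P: "P \<subseteq> NN" "P \<noteq> {}" and a0: "a0 \<in> E" "\<forall>x\<in>P. a0 \<le> x" and w: "is_inf_in UNIV P w"
  shows "w \<in> NN"
proof -
  have "a0 \<le> w" using w a0 by (auto simp: is_inf_in_def)
  obtain x0 where x0: "x0 \<in> P" using P by blast
  then obtain b0 where b0: "b0 \<in> E" "x0 \<le> b0" using P by (auto simp: NN_def)
  have "w \<le> x0" using w x0 unfolding is_inf_in_def by blast
  then have "w \<le> b0" using b0(2) by (rule order.trans)
  have "is_inf_in UNIV {b\<in>E. w \<le> b} w"
    unfolding is_inf_in_def
  proof (intro conjI ballI impI)
    fix z assume z: "\<forall>g\<in>{b \<in> E. w \<le> b}. z \<le> g"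
    have "z \<le> x" if "x \<in> P" for x
    proof -
      have xw: "w \<le> x" using w that by (auto simp: is_inf_in_def)
      have "is_inf_in UNIV {b\<in>E. x \<le> b} x" using P that by (auto simp: NN_def)
      moreover have "\<forall>b\<in>{b\<in>E. x \<le> b}. z \<le> b"
      proof
        fix b assume "b \<in> {b\<in>E. x \<le> b}"
        then have "b \<in> E" "w \<le> b" using xw order.trans by auto
        then show "z \<le> b" using z by blast
      qed
      ultimately show ?thesis by (auto simp: is_inf_in_def)
    qed
    then show "z \<le> w" using w by (auto simp: is_inf_in_def)
  qed auto
  then show ?thesis using a0 \<open>a0 \<le> w\<close> b0 \<open>w \<le> b0\<close> by (auto simp: NN_def)
qed

lemma SUPNN:
  assumes Q: "Q \<subseteq> NN" "Q \<noteq> {}" and b0: "b0 \<in> E" "\<forall>q\<in>Q. q \<le> b0" and s: "is_sup_in UNIV Q s"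
  shows "s \<in> NN"
proof -
  have "s \<le> b0" using s b0 by (auto simp: is_sup_in_def)
  obtain q0 where q0: "q0 \<in> Q" using Q by blast
  then obtain a0 where a0: "a0 \<in> E" "a0 \<le> q0" using Q by (auto simp: NN_def)
  have "q0 \<le> s" using s q0 unfolding is_sup_in_def by blast
  with a0(2) have "a0 \<le> s" by (rule order.trans)
  have "is_sup_in UNIV {a\<in>E. a \<le> s} s"
    unfolding is_sup_in_def
  proof (intro conjI ballI impI)
    fix v assume v: "\<forall>g\<in>{a \<in> E. a \<le> s}. g \<le> v"
    have "q \<le> v" if "q \<in> Q" for q
    proof -
      have qs: "q \<le> s" using s that by (auto simp: is_sup_in_def)
      have "is_sup_in UNIV {a\<in>E. a \<le> q} q" using RL1 Q that by blast
      moreover have "\<forall>a\<in>{a\<in>E. a \<le> q}. a \<le> v"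
      proof
        fix a assume "a \<in> {a\<in>E. a \<le> q}"
        then have "a \<in> E" "a \<le> s" using qs order.trans by auto
        then show "a \<le> v" using v by blast
      qed
      ultimately show ?thesis by (auto simp: is_sup_in_def)
    qed
    then show "s \<le> v" using s by (auto simp: is_sup_in_def)
  qed auto
  then show ?thesis using RL2[OF a0(1) \<open>a0 \<le> s\<close> b0(1) \<open>s \<le> b0\<close>] by blast
qed

lemma LIM:
  fixes M :: "'a filter"
  assumes Mnb: "M \<noteq> bot"
    and evT: "eventually (\<lambda>x. x \<in> NN \<and> - e0 \<le> x \<and> x \<le> e0) M"
    and e0: "e0 \<in> E" "0 \<le> e0"
    and G: "is_inf_in UNIV G 0"
    and evG: "\<forall>g\<in>G. eventually (\<lambda>x. y - g \<le> x \<and> x \<le> y + g) M"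
  shows "y \<in> NN"
proof -
  define T where "T = {x. x \<in> NN \<and> - e0 \<le> x \<and> x \<le> e0}"
  define Q where "Q = {w. \<exists>P. eventually (\<lambda>x. x \<in> P) M \<and> P \<subseteq> T \<and> is_inf_in UNIV P w}"
  have ne: "\<exists>x. x \<in> P" if "eventually (\<lambda>x. x \<in> P) M" for P
    using eventually_happens[OF that] Mnb by blast
  have infP: "\<exists>w. is_inf_in UNIV P w" if "eventually (\<lambda>x. x \<in> P) M" "P \<subseteq> T" for P
    using inf_ex[of P "- e0"] ne[OF that(1)] that(2) by (auto simp: T_def)
  have TM: "eventually (\<lambda>x. x \<in> T) M" using evT by (simp add: T_def)
  have me0: "- e0 \<in> E" using e0 rs_neg[OF E_sub] by blast
  obtain w0 where w0: "is_inf_in UNIV T w0" using infP[OF TM] by blast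
  have "w0 \<in> Q" unfolding Q_def using TM w0 by blast
  then have Qne: "Q \<noteq> {}" by blast
  have QNN: "Q \<subseteq> NN"
  proof
    fix w assume "w \<in> Q"
    then obtain P where P: "eventually (\<lambda>x. x \<in> P) M" "P \<subseteq> T" "is_inf_in UNIV P w" by (auto simp: Q_def)
    show "w \<in> NN"
      by (rule INFNN[OF _ _ me0 _ P(3)]) (use P ne T_def in auto)
  qed
  have Qb: "\<forall>q\<in>Q. q \<le> e0"
  proof
    fix w assume "w \<in> Q"
    then obtain P where P: "eventually (\<lambda>x. x \<in> P) M" "P \<subseteq> T" "is_inf_in UNIV P w" by (auto simp: Q_def)
    then obtain x where "x \<in> P" using ne by blast
    then have "w \<le> x" "x \<le> e0" using P unfolding T_def is_inf_in_def by auto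
    then show "w \<le> e0" by (rule order.trans)
  qed
  have "is_sup_in UNIV Q y"
    unfolding is_sup_in_def
  proof (intro conjI ballI impI)
    fix w assume "w \<in> Q"
    then obtain P where P: "eventually (\<lambda>x. x \<in> P) M" "P \<subseteq> T" "is_inf_in UNIV P w" by (auto simp: Q_def)
    have "w - y \<le> g" if "g \<in> G" for g
    proof -
      have "eventually (\<lambda>x. x \<in> P \<and> x \<le> y + g) M"
        using P(1) evG that by (auto elim: eventually_elim2)
      then obtain x where "x \<in> P" "x \<le> y + g" using eventually_happens Mnb by blast
      then have "w \<le> x" "x \<le> y + g" using P(3) unfolding is_inf_in_def by auto
      then have "w \<le> y + g" by (rule order.trans)
      then show ?thesis by (simp add: diff_le_eq add.commute)
    qed
    then have "w - y \<le> 0" using G unfolding is_inf_in_def by blast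
    then show "w \<le> y" by simp
  next
    fix v assume v: "\<forall>q\<in>Q. q \<le> v"
    have "y - v \<le> g" if "g \<in> G" for g
    proof -
      let ?P = "{x \<in> T. y - g \<le> x}"
      have evP: "eventually (\<lambda>x. x \<in> ?P) M"
        using TM evG that by (auto elim: eventually_elim2)
      obtain w where w: "is_inf_in UNIV ?P w" using infP[OF evP] by blast
      have "eventually (\<lambda>x. x \<in> ?P) M \<and> ?P \<subseteq> T \<and> is_inf_in UNIV ?P w" using evP w by blast
      then have "w \<in> Q" unfolding Q_def by blast
      then have "w \<le> v" using v by blast
      moreover have "y - g \<le> w" using w by (auto simp: is_inf_in_def)
      ultimately have "y - g \<le> v" by (rule order_trans[rotated])
      then show ?thesis by (simp add: diff_le_eq le_diff_eq add.commute)
    qed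
    then have "y - v \<le> 0" using G unfolding is_inf_in_def by blast
    then show "y \<le> v" by simp
  qed simp
  then show ?thesis by (rule SUPNN[OF QNN Qne e0(1) Qb])
qed

end


context vsetting
begin

lemma E_NN: "E \<subseteq> NN"
proof
  fix w assume w: "w \<in> E"
  have "is_inf_in UNIV {b\<in>E. w \<le> b} w"
    unfolding is_inf_in_def using w by blast
  then show "w \<in> NN" using w unfolding NN_def by blast
qed

lemma E_Inv: "E \<subseteq> Inv"
proof
  fix e assume e: "e \<in> E"
  have "Bnd e"
    unfolding Bnd_def
  proof (intro allI impI)
    fix u :: 'a assume u0: "0 \<le> u" and H: "\<forall>e\<in>E. 0 \<le> e \<longrightarrow> inf u e = 0"
    have "vabs e \<in> E" using rs_vabs[OF E_sub e] .
    then have "inf u (vabs e) = 0" using H vabs_nonneg by blast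
    then show "inf (vabs e) u = 0" by (simp add: inf_commute)
  qed
  moreover have "trunc e0 e \<in> NN" if "e0 \<in> E" for e0
  proof -
    have "trunc e0 e \<in> E" unfolding trunc_def
      using that e rs_sup[OF E_sub] rs_inf[OF E_sub] rs_neg[OF E_sub] by blast
    then show ?thesis using E_NN by blast
  qed
  ultimately show "e \<in> Inv" unfolding Inv_def by blast
qed

lemma Bnd_closed:
  fixes N :: "'a filter"
  assumes Nnb: "N \<noteq> bot" and ev: "eventually (\<lambda>x. Bnd x) N"
    and G: "is_inf_in UNIV G 0"
    and evG: "\<forall>g\<in>G. eventually (\<lambda>x. y - g \<le> x \<and> x \<le> y + g) N"
  shows "Bnd y"
  unfolding Bnd_def
proof (intro allI impI)
  fix u :: 'a assume u0: "0 \<le> u" and H: "\<forall>e\<in>E. 0 \<le> e \<longrightarrow> inf u e = 0"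
  have le: "inf (vabs y) u \<le> g" if g: "g \<in> G" for g
  proof -
    have "eventually (\<lambda>x. Bnd x \<and> (y - g \<le> x \<and> x \<le> y + g)) N"
      using ev evG g by (auto elim: eventually_elim2)
    then obtain x where x: "Bnd x" "y - g \<le> x" "x \<le> y + g"
      using eventually_happens Nnb by blast
    have x0: "inf (vabs x) u = 0" using x(1) u0 H unfolding Bnd_def by blast
    have yx: "vabs (y - x) \<le> g" using vabs_le[OF x(2) x(3)] .
    have "inf (vabs y) u \<le> inf (vabs x + vabs (y - x)) u"
      using vabs_tri[of y x] by (rule inf_mono) simp
    also have "\<dots> \<le> inf (vabs x) u + inf (vabs (y - x)) u"
      by (rule inf_subadd) (simp_all add: vabs_nonneg u0)
    also have "\<dots> = inf (vabs (y - x)) u" using x0 by simp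
    also have "\<dots> \<le> vabs (y - x)" by simp
    also have "\<dots> \<le> g" by (rule yx)
    finally show ?thesis .
  qed
  have "inf (vabs y) u \<le> 0" using G le unfolding is_inf_in_def by blast
  moreover have "0 \<le> inf (vabs y) u" using u0 vabs_nonneg[of y] by simp
  ultimately show "inf (vabs y) u = 0" by (rule antisym)
qed

lemma Inv_closed: "order_closed_in UNIV Inv"
  unfolding order_closed_in_def
proof (intro allI impI)
  fix N :: "'a filter" and y
  assume a: "N \<noteq> bot \<and> eventually (\<lambda>y. y \<in> Inv) N \<and> order_conv_in UNIV (\<lambda>y. y) N y"
  then have Nnb: "N \<noteq> bot" and ev: "eventually (\<lambda>y. y \<in> Inv) N" by auto
  from a obtain G where G: "is_inf_in UNIV G 0"
    and evG: "\<forall>g\<in>G. eventually (\<lambda>x. y - g \<le> x \<and> x \<le> y + g) N"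
    unfolding order_conv_in_def by blast
  have "Bnd y"
    by (rule Bnd_closed[OF Nnb _ G evG]) (use ev in \<open>auto simp: Inv_def elim: eventually_mono\<close>)
  moreover have "trunc e0 y \<in> NN" if e0: "e0 \<in> E" "0 \<le> e0" for e0
  proof (rule LIM[OF _ _ e0 G])
    show "filtermap (trunc e0) N \<noteq> bot" using Nnb by (simp add: filtermap_bot_iff)
    show "eventually (\<lambda>x. x \<in> NN \<and> - e0 \<le> x \<and> x \<le> e0) (filtermap (trunc e0) N)"
      unfolding eventually_filtermap
      using ev by (auto simp: Inv_def e0 trunc_bounds elim!: eventually_mono)
    show "\<forall>g\<in>G. eventually (\<lambda>x. trunc e0 y - g \<le> x \<and> x \<le> trunc e0 y + g) (filtermap (trunc e0) N)"
    proof
      fix g assume g: "g \<in> G"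
      then have g0: "0 \<le> g" using G unfolding is_inf_in_def by blast
      have "eventually (\<lambda>x. y - g \<le> x \<and> x \<le> y + g) N" using evG g by blast
      then show "eventually (\<lambda>x. trunc e0 y - g \<le> x \<and> x \<le> trunc e0 y + g) (filtermap (trunc e0) N)"
        unfolding eventually_filtermap
      proof (rule eventually_mono)
        fix x assume "y - g \<le> x \<and> x \<le> y + g"
        then show "trunc e0 y - g \<le> trunc e0 x \<and> trunc e0 x \<le> trunc e0 y + g"
          using trunc_lip[OF g0, of y x e0] by blast
      qed
    qed
  qed
  ultimately show "y \<in> Inv" unfolding Inv_def by blast
qed

lemma C_Inv: "C \<subseteq> Inv"
  unfolding C_def by (rule cl_min) (use E_Inv Inv_closed in auto)

lemma SD:
  assumes yC: "y \<in> C" and y0: "0 \<le> y"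
  shows "is_sup_in UNIV {e\<in>E. 0 \<le> e \<and> e \<le> y} y"
proof -
  have yI: "y \<in> Inv" using yC C_Inv by blast
  let ?L = "{e\<in>E. 0 \<le> e \<and> e \<le> y}"
  have main: "y \<le> v" if v: "\<forall>e\<in>?L. e \<le> v" for v
  proof -
    have "0 \<in> ?L" using rs_0[OF E_sub] y0 by simp
    then have v0: "0 \<le> v" using v by blast
    have A: "inf y e0 \<le> v" if e0: "e0 \<in> E" "0 \<le> e0" for e0
    proof -
      have "trunc e0 y \<in> NN" using yI e0 unfolding Inv_def by blast
      then have "inf y e0 \<in> NN" using trunc_pos[OF y0 e0(2)] by simp
      then have sup: "is_sup_in UNIV {a\<in>E. a \<le> inf y e0} (inf y e0)" by (rule RL1)
      have "\<forall>a\<in>{a\<in>E. a \<le> inf y e0}. a \<le> v"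
      proof
        fix a assume a: "a \<in> {a\<in>E. a \<le> inf y e0}"
        have aE: "sup a 0 \<in> E" using a rs_sup[OF E_sub] rs_0[OF E_sub] by blast
        have "0 \<le> inf y e0" using y0 e0(2) by simp
        then have sl: "sup a 0 \<le> inf y e0" using a by simp
        then have "sup a 0 \<le> y" using inf_le1[of y e0] by (rule order.trans)
        then have "sup a 0 \<in> ?L" using aE by simp
        then have "sup a 0 \<le> v" using v by blast
        then show "a \<le> v" using sup_ge1[of a 0] by (metis order.trans)
      qed
      then show "inf y e0 \<le> v" using sup unfolding is_sup_in_def by blast
    qed
    define r where "r = y - inf y v"
    have r0: "0 \<le> r" by (simp add: r_def)
    have "0 \<le> inf y v" using y0 v0 by simp
    then have ry: "r \<le> y" by (simp add: r_def)
    have disj: "inf r e' = 0" if e': "e' \<in> E" "0 \<le> e'" for e'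
    proof -
      define q where "q = inf r e'"
      have q0: "0 \<le> q" using r0 e'(2) by (simp add: q_def)
      have qn: "real n *\<^sub>R q \<le> y" for n
      proof -
        define m where "m = real n *\<^sub>R e'"
        have mE: "m \<in> E" using rs_scale[OF E_sub e'(1)] by (simp add: m_def)
        have m0: "0 \<le> m" using e'(2) by (simp add: m_def scaleR_nonneg_nonneg)
        have "inf y m \<le> v" using A mE m0 by blast
        then have "inf y m \<le> inf y v" by simp
        then have rm: "r \<le> y - inf y m" unfolding r_def by (rule diff_left_mono)
        define nq where "nq = real n *\<^sub>R q"
        have nq0: "0 \<le> nq" using q0 by (simp add: nq_def scaleR_nonneg_nonneg)
        have "q \<le> e'" by (simp add: q_def)
        then have "nq \<le> m" unfolding nq_def m_def by (rule scaleR_left_mono) simp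
        then have "inf y nq \<le> inf y m" by (simp add: le_infI2)
        then have "y - inf y m \<le> y - inf y nq" by (rule diff_left_mono)
        also have "\<dots> = sup 0 (y - nq)" by (rule diff_inf_eq)
        finally have "r \<le> sup 0 (y - nq)" using rm by (rule order.trans[rotated])
        then have qt: "q \<le> sup 0 (y - nq)" unfolding q_def by (rule le_infI1)
        define tm where "tm = sup 0 (- (y - nq))"
        have tm0: "0 \<le> tm" by (simp add: tm_def)
        have "inf q tm \<le> inf (sup 0 (y - nq)) tm" using qt by (rule inf_mono) simp
        also have "\<dots> = 0" unfolding tm_def by (rule pos_neg_disj)
        finally have "inf q tm \<le> 0" .
        moreover have "0 \<le> inf q tm" using q0 tm0 by simp
        ultimately have qtm: "inf q tm = 0" by (rule antisym)
        have "nq - y \<le> nq" using y0 by simp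
        then have tm_le: "tm \<le> nq" using nq0 by (simp add: tm_def)
        have "tm = inf nq tm" using tm_le by (simp add: inf_absorb2)
        also have "\<dots> \<le> real n *\<^sub>R inf q tm" unfolding nq_def by (rule inf_scale_nat[OF q0 tm0])
        also have "\<dots> = 0" by (simp add: qtm)
        finally have "tm \<le> 0" .
        then have "- (y - nq) \<le> 0" unfolding tm_def by simp
        then show ?thesis by (simp add: nq_def)
      qed
      have "q = 0" using arch[OF q0] qn by blast
      then show ?thesis by (simp add: q_def)
    qed
    have "Bnd y" using yI unfolding Inv_def by blast
    then have "inf (vabs y) r = 0" using r0 disj unfolding Bnd_def by blast
    then have "inf y r = 0" using vabs_pos[OF y0] by simp
    then have "r = 0" using ry by (simp add: inf_absorb2)
    then have "y = inf y v" by (simp add: r_def)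
    then show "y \<le> v" by (metis inf_le2)
  qed
  show ?thesis unfolding is_sup_in_def using main by auto
qed

lemma C_dense: "order_dense_in C E"
  unfolding order_dense_in_def
proof (intro ballI impI)
  fix h assume hC: "h \<in> C" and h0: "0 < h"
  show "\<exists>e\<in>E. 0 < e \<and> e \<le> h"
  proof (rule ccontr)
    assume no: "\<not> (\<exists>e\<in>E. 0 < e \<and> e \<le> h)"
    have all0: "\<forall>e\<in>{e\<in>E. 0 \<le> e \<and> e \<le> h}. e \<le> 0"
    proof
      fix e assume e: "e \<in> {e\<in>E. 0 \<le> e \<and> e \<le> h}"
      then have nl: "\<not> 0 < e" using no by blast
      have "e = 0"
      proof (rule ccontr)
        assume "e \<noteq> 0"
        moreover have "0 \<le> e" using e by blast
        ultimately have "0 < e" by (simp add: order_less_le)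
        with nl show False by blast
      qed
      then show "e \<le> 0" by simp
    qed
    have h0': "0 \<le> h" using h0 by (rule less_imp_le)
    have "is_sup_in UNIV {e\<in>E. 0 \<le> e \<and> e \<le> h} h" by (rule SD[OF hC h0'])
    then have "h \<le> 0" using all0 unfolding is_sup_in_def by blast
    with h0 show False by simp
  qed
qed

lemma part5: "order_closure_in F E = C \<inter> F"
proof
  show "order_closure_in F E \<subseteq> C \<inter> F"
  proof (rule cl_min)
    show "C \<inter> F \<subseteq> F" by blast
    show "E \<subseteq> C \<inter> F" using EC EF by blast
    show "order_closed_in F (C \<inter> F)"
      unfolding order_closed_in_def
    proof (intro allI impI)
      fix N :: "'a filter" and f
      assume a: "N \<noteq> bot \<and> eventually (\<lambda>y. y \<in> C \<inter> F) N \<and> order_conv_in F (\<lambda>y. y) N f"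
      then obtain G where G: "f \<in> F" "G \<subseteq> F" "is_inf_in F G 0"
        "\<forall>g\<in>G. eventually (\<lambda>i. f - g \<le> i \<and> i \<le> f + g) N"
        unfolding order_conv_in_def by blast
      have "order_conv_in UNIV (\<lambda>y. y) N f"
        unfolding order_conv_in_def using G F_regU[OF G(2) G(3)] by blast
      moreover have "eventually (\<lambda>y. y \<in> C) N" using a by (auto elim: eventually_mono)
      ultimately have "f \<in> C" using a closed_mem[OF C_closed] by blast
      with G show "f \<in> C \<inter> F" by blast
    qed
  qed
next
  let ?K = "order_closure_in F E"
  have KR: "riesz_subspace ?K" by (rule cl_riesz[OF F_sub E_sub EF])
  have pos: "y \<in> ?K" if yC: "y \<in> C" and yF: "y \<in> F" and y0: "0 \<le> y" for y
  proof -
    let ?L = "{e\<in>E. 0 \<le> e \<and> e \<le> y}"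
    have img: "(\<lambda>d. y - d) ` ?L \<subseteq> F" using rs_diff[OF F_sub] yF EF by blast
    show ?thesis
    proof (rule dir_in_closed[OF cl_closed[of F E], of ?L y])
      show "?L \<subseteq> ?K" using cl_ext[of E F] by blast
      show "?L \<noteq> {}" using rs_0[OF E_sub] y0 by blast
      fix a b assume "a \<in> ?L" "b \<in> ?L"
      then show "\<exists>c\<in>?L. a \<le> c \<and> b \<le> c"
        by (intro bexI[of _ "sup a b"]) (auto intro: rs_sup[OF E_sub] le_supI1)
    next
      show "y \<in> F" by (rule yF)
      show "\<forall>d\<in>?L. d \<le> y" by blast
      show "(\<lambda>d. y - d) ` ?L \<subseteq> F" by (rule img)
      show "is_inf_in F ((\<lambda>d. y - d) ` ?L) 0"
        by (rule sup_to_inf[OF SD[OF yC y0] rs_0[OF F_sub] img])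
    qed
  qed
  show "C \<inter> F \<subseteq> ?K"
  proof
    fix x assume x: "x \<in> C \<inter> F"
    have "sup x 0 \<in> C" using x rs_sup[OF C_riesz] rs_0[OF C_riesz] by blast
    moreover have "sup x 0 \<in> F" using x rs_sup[OF F_sub] rs_0[OF F_sub] by blast
    ultimately have p: "sup x 0 \<in> ?K" using pos by simp
    have "sup (- x) 0 \<in> C" using x rs_sup[OF C_riesz] rs_0[OF C_riesz] rs_neg[OF C_riesz] by blast
    moreover have "sup (- x) 0 \<in> F" using x rs_sup[OF F_sub] rs_0[OF F_sub] rs_neg[OF F_sub] by blast
    ultimately have n: "sup (- x) 0 \<in> ?K" using pos by simp
    have "sup x 0 - sup (- x) 0 \<in> ?K" using rs_diff[OF KR p n] .
    then show "x \<in> ?K" by (simp add: pos_minus_neg)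
  qed
qed

lemma main: "universally_complete C \<and> E \<subseteq> C \<and> order_dense_in C E \<and> order_closure_in F E = C \<inter> F"
  using C_univ EC C_dense part5 by blast

end

theorem corollary9p4:
  fixes F E :: "'a::{ordered_real_vector,lattice} set"
  assumes Fu: "universally_complete (UNIV :: 'a set)"
    and F_sub: "riesz_subspace F"
    and F_arch: "archimedean_on F"
    and F_dense: "order_dense_in (UNIV :: 'a set) F"
    and E_sub: "riesz_subspace E"
    and EF: "E \<subseteq> F"
    and E_reg: "regular_in F E"
  shows "universally_complete (order_closure_in UNIV E)
         \<and> E \<subseteq> order_closure_in UNIV E
         \<and> order_dense_in (order_closure_in UNIV E) E
         \<and> order_closure_in F E = order_closure_in UNIV E \<inter> F"
proof -
  interpret vsetting F E
    using Fu F_sub F_dense E_sub EF E_reg by unfold_locales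
  show ?thesis using main unfolding C_def .
qed

end
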